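(* Let $v$ be a normalized, non-negative, submodular (not necessarily monotone) valuation, and run the deterministic mechanism BFM-VM described in the context with $\ell=2$ and $\alpha=1+\sqrt{3}$, with all sellers behaving truthfully. Then the output $S^*$ satisfies $$v(S^* )\ \ge\ \frac{v(O)}{12+4\sqrt{3}},$$ where $O$ is an optimal solution of $\max\{v(S): S\subseteq\mathcal{N},\ c(S)\le B\}$. Moreover, counting each evaluation of $v$ as one step, BFM-VM runs in $\mathcal{O}(n\log n)$ time.
   Context: Setting. $\mathcal{N}$ is a finite set of $n$ sellers. The valuation $v:2^{\mathcal{N}}\to\mathbb{R}_{\ge 0}$ satisfies $v(\emptyset)=0$ and is submodular (for $X\subseteq Y\subseteq\mathcal{N}$ and $u\notin Y$, $v(u\mid Y)\le v(u\mid X)$), where $v(S\mid T)=v(S\cup T)-v(T)$, $v(u\mid T)=v(\{u\}\mid T)$, $v(u)=v(\{u\})$. Each seller $u$ has a private cost $c(u)\ge 0$; $c(X)=\sum_{u\in X}c(u)$. $B>0$ is the budget, $[\ell]=\{1,\dots,\ell\}$. Sellers behave truthfully: a seller $u$ offered price $q$ accepts iff $c(u)\le q$. Mechanism BFM-VM (inputs $B$, $\alpha>1$, $\ell\in\{1,2\}$): 1. Offer every seller the price $B$; let $R$ be the set of sellers who accept, and set $p(u)=B$ for $u\in R$. 2. Set $t=1$, $\rho_1=\max_{u\in R}v(u)$, $S_{1,1}=\{u_0\}$ for some $u_0\in\arg\max_{u\in R}v(u)$, and (if $\ell=2$) $S_{2,1}=\emptyset$. 3. Repeat rounds: set $t\leftarrow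 t+1$, $\rho_t=\alpha\rho_{t-1}$, $S_{i,t}=\emptyset$ for $i\in[\ell]$. Process the sellers $u\in R\setminus\bigcup_{i=1}^{\ell}S_{i,t-1}$ one at a time in a fixed order. For each such $u$: pick $j\in\arg\max_{i\in[\ell]}v(u\mid S_{i,t})$ (current contents); update $p(u)\leftarrow\min\{p(u),\ v(u\mid S_{j,t})/(\rho_t/B)\}$ and offer $p(u)$ to $u$. If $u$ accepts: if $v(S_{j,t}\cup\{u\})>\rho_t$, end the round immediately; otherwise add $u$ to $S_{j,t}$. If $u$ rejects, remove $u$ from $R$. After the round, stop if $R\setminus\bigcup_{i=1}^{\ell}(S_{i,t-1}\cup S_{i,t})=\emptyset$; otherwise start another round. 4. Let $M$ be the final value of $t$. Output $S^*\in\arg\max_{A\in\{S_{i,t}: i\in[\ell],\ t\in\{M-1,M\}\}}v(A)$, paying each $u\in S^*$ its current price $p(u)$. *)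

theory Defs
  imports Complex_Main
begin

text \<open>State of mechanism BFM-VM with ell = 2.
  Rs: current set R; pr: current prices; A1, A2: the sets S_{1,t}, S_{2,t} of the
  current round t; P1, P2: the sets S_{1,t-1}, S_{2,t-1}; rho: rho_t; tt: t;
  ended: whether the current round has ended early; evals: number of evaluations
  of v performed so far.\<close>

record 'a bfm_state =
  Rs :: "'a set"
  pr :: "'a \<Rightarrow> real"
  A1 :: "'a set"
  A2 :: "'a set"
  P1 :: "'a set"
  P2 :: "'a set"
  rho :: real
  tt :: nat
  ended :: bool
  evals :: nat

text \<open>The index j is an arg max of
  v(u | S_{i,t}); ties are broken by the arbitrary rule tie (True means pick 1).
  Computing the two marginals costs 4 evaluations of v (v(S_j + u) is then known).\<close>

definition bfm_proc ::
  "('a set \<Rightarrow> real) \<Rightarrow> ('a \<Rightarrow> real) \<Rightarrow> real \<Rightarrow> (nat \<Rightarrow> 'a \<Rightarrow> bool)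
   \<Rightarrow> 'a \<Rightarrow> 'a bfm_state \<Rightarrow> 'a bfm_state" where
  "bfm_proc v c B tie u s =
    (if ended s \<or> u \<notin> Rs s \<or> u \<in> P1 s \<or> u \<in> P2 s then s else
     (let m1 = v (insert u (A1 s)) - v (A1 s);
          m2 = v (insert u (A2 s)) - v (A2 s);
          j1 = (m2 < m1 \<or> (m1 = m2 \<and> tie (tt s) u));
          Sj = (if j1 then A1 s else A2 s);
          mj = (if j1 then m1 else m2);
          q = min (pr s u) (mj / (rho s / B));
          s' = s\<lparr>pr := (pr s)(u := q), evals := evals s + 4\<rparr>
      in if c u \<le> q then
           (if rho s < v (insert u Sj) then s'\<lparr>ended := True\<rparr>
            else if j1 then s'\<lparr>A1 := insert u (A1 s)\<rparr>
            else s'\<lparr>A2 := insert u (A2 s)\<rparr>)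
         else s'\<lparr>Rs := Rs s - {u}\<rparr>))"

definition bfm_start :: "real \<Rightarrow> 'a bfm_state \<Rightarrow> 'a bfm_state" where
  "bfm_start alpha s = s\<lparr>P1 := A1 s, P2 := A2 s, A1 := {}, A2 := {},
      rho := alpha * rho s, tt := tt s + 1, ended := False\<rparr>"

definition bfm_round ::
  "'a list \<Rightarrow> ('a set \<Rightarrow> real) \<Rightarrow> ('a \<Rightarrow> real) \<Rightarrow> real \<Rightarrow> real \<Rightarrow> (nat \<Rightarrow> 'a \<Rightarrow> bool)
   \<Rightarrow> 'a bfm_state \<Rightarrow> 'a bfm_state" where
  "bfm_round ord v c B alpha tie s = fold (bfm_proc v c B tie) ord (bfm_start alpha s)"

definition bfm_done :: "'a bfm_state \<Rightarrow> bool" where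
  "bfm_done s \<longleftrightarrow> Rs s - (P1 s \<union> P2 s \<union> A1 s \<union> A2 s) = {}"

text \<open>Step 1: R = sellers accepting price B; the n offers use n evaluations v(u)
  (one per seller).  u0 is the chosen maximiser of v({u}) over R.\<close>

definition bfm_R0 :: "'a list \<Rightarrow> ('a \<Rightarrow> real) \<Rightarrow> real \<Rightarrow> 'a set" where
  "bfm_R0 ord c B = {u \<in> set ord. c u \<le> B}"

definition bfm_init ::
  "'a list \<Rightarrow> ('a set \<Rightarrow> real) \<Rightarrow> ('a \<Rightarrow> real) \<Rightarrow> real \<Rightarrow> 'a \<Rightarrow> 'a bfm_state" where
  "bfm_init ord v c B u0 =
    \<lparr>Rs = bfm_R0 ord c B, pr = (\<lambda>_. B), A1 = {u0}, A2 = {}, P1 = {}, P2 = {},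
     rho = v {u0}, tt = 1, ended = False, evals = length ord\<rparr>"

text \<open>State after the round with index k+1 (k = 0: the initial state, t = 1).\<close>

definition bfm_state_at ::
  "'a list \<Rightarrow> ('a set \<Rightarrow> real) \<Rightarrow> ('a \<Rightarrow> real) \<Rightarrow> real \<Rightarrow> real \<Rightarrow> (nat \<Rightarrow> 'a \<Rightarrow> bool)
   \<Rightarrow> 'a \<Rightarrow> nat \<Rightarrow> 'a bfm_state" where
  "bfm_state_at ord v c B alpha tie u0 k =
     (bfm_round ord v c B alpha tie ^^ k) (bfm_init ord v c B u0)"

text \<open>The mechanism terminates: some round t = k+1 >= 2 passes the stopping test.
  (If R is empty there is nothing to run.)\<close>

definition bfm_terminates ::
  "'a list \<Rightarrow> ('a set \<Rightarrow> real) \<Rightarrow> ('a \<Rightarrow> real) \<Rightarrow> real \<Rightarrow> real \<Rightarrow> (nat \<Rightarrow> 'a \<Rightarrow> bool)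
   \<Rightarrow> 'a \<Rightarrow> bool" where
  "bfm_terminates ord v c B alpha tie u0 \<longleftrightarrow>
     bfm_R0 ord c B = {} \<or> (\<exists>k\<ge>1. bfm_done (bfm_state_at ord v c B alpha tie u0 k))"

definition bfm_final ::
  "'a list \<Rightarrow> ('a set \<Rightarrow> real) \<Rightarrow> ('a \<Rightarrow> real) \<Rightarrow> real \<Rightarrow> real \<Rightarrow> (nat \<Rightarrow> 'a \<Rightarrow> bool)
   \<Rightarrow> 'a \<Rightarrow> 'a bfm_state" where
  "bfm_final ord v c B alpha tie u0 =
     bfm_state_at ord v c B alpha tie u0
       (LEAST k. 1 \<le> k \<and> bfm_done (bfm_state_at ord v c B alpha tie u0 k))"

text \<open>Candidate output sets {S_{i,t} : i in {1,2}, t in {M-1, M}}; S* is any of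
  maximal value.  If R is empty, the output is the empty set.\<close>

definition bfm_candidates ::
  "'a list \<Rightarrow> ('a set \<Rightarrow> real) \<Rightarrow> ('a \<Rightarrow> real) \<Rightarrow> real \<Rightarrow> real \<Rightarrow> (nat \<Rightarrow> 'a \<Rightarrow> bool)
   \<Rightarrow> 'a \<Rightarrow> 'a set set" where
  "bfm_candidates ord v c B alpha tie u0 =
     (if bfm_R0 ord c B = {} then {{}} else
      (let s = bfm_final ord v c B alpha tie u0 in {P1 s, P2 s, A1 s, A2 s}))"

text \<open>Total number of evaluations of v (including 4 for selecting S* at the end).\<close>

definition bfm_num_evals ::
  "'a list \<Rightarrow> ('a set \<Rightarrow> real) \<Rightarrow> ('a \<Rightarrow> real) \<Rightarrow> real \<Rightarrow> real \<Rightarrow> (nat \<Rightarrow> 'a \<Rightarrow> bool)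
   \<Rightarrow> 'a \<Rightarrow> nat" where
  "bfm_num_evals ord v c B alpha tie u0 =
     (if bfm_R0 ord c B = {} then length ord
      else evals (bfm_final ord v c B alpha tie u0) + 4)"

definition bfm_instance ::
  "'a list \<Rightarrow> ('a set \<Rightarrow> real) \<Rightarrow> ('a \<Rightarrow> real) \<Rightarrow> real \<Rightarrow> 'a \<Rightarrow> bool" where
  "bfm_instance ord v c B u0 \<longleftrightarrow>
     distinct ord \<and> v {} = 0 \<and> (\<forall>S \<subseteq> set ord. 0 \<le> v S) \<and>
     (\<forall>X Y u. X \<subseteq> Y \<longrightarrow> Y \<subseteq> set ord \<longrightarrow> u \<in> set ord - Y \<longrightarrow>
         v (insert u Y) - v Y \<le> v (insert u X) - v X) \<and>
     (\<forall>u \<in> set ord. 0 \<le> c u) \<and> 0 < B \<and>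
     (bfm_R0 ord c B \<noteq> {} \<longrightarrow>
        u0 \<in> bfm_R0 ord c B \<and> (\<forall>u \<in> bfm_R0 ord c B. v {u} \<le> v {u0}))"

end

theory Submission
  imports Defs
begin


locale submod =
  fixes N :: "'a set" and v :: "'a set \<Rightarrow> real"
  assumes finN: "finite N" and v0: "v {} = 0" and nonneg: "\<forall>S\<subseteq>N. 0 \<le> v S"
    and sub: "\<forall>X Y u. X \<subseteq> Y \<longrightarrow> Y \<subseteq> N \<longrightarrow> u \<in> N - Y \<longrightarrow>
         v (insert u Y) - v Y \<le> v (insert u X) - v X"
begin

lemma marg_anti: "X \<subseteq> Y \<Longrightarrow> Y \<subseteq> N \<Longrightarrow> u \<in> N \<Longrightarrow> u \<notin> Y \<Longrightarrow>
   v (insert u Y) - v Y \<le> v (insert u X) - v X"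
  using sub by blast

lemma sum_marg: "finite T \<Longrightarrow> A \<union> T \<subseteq> N \<Longrightarrow> A \<inter> T = {} \<Longrightarrow>
   v (A \<union> T) \<le> v A + (\<Sum>u\<in>T. v (insert u A) - v A)"
proof (induction T rule: finite_induct)
  case empty then show ?case by simp
next
  case (insert x T)
  have "v (insert x (A \<union> T)) - v (A \<union> T) \<le> v (insert x A) - v A"
    using insert by (intro marg_anti) auto
  then show ?case using insert by auto
qed

lemma diff_mono: "finite D \<Longrightarrow> Z \<subseteq> X \<Longrightarrow> X \<union> D \<subseteq> N \<Longrightarrow> D \<inter> X = {} \<Longrightarrow>
   v (X \<union> D) - v X \<le> v (Z \<union> D) - v Z"
proof (induction D rule: finite_induct)
  case empty then show ?case by simp
next
  case (insert d D)
  have "v (insert d (X \<union> D)) - v (X \<union> D) \<le> v (insert d (Z \<union> D)) - v (Z \<union> D)"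
    using insert by (intro marg_anti) auto
  then show ?case using insert by auto
qed

lemma lattice: "X \<subseteq> N \<Longrightarrow> Y \<subseteq> N \<Longrightarrow> v (X \<union> Y) + v (X \<inter> Y) \<le> v X + v Y"
proof -
  assume a: "X \<subseteq> N" "Y \<subseteq> N"
  have f: "finite (Y - X)" using a finN finite_subset by blast
  have "v (X \<union> (Y - X)) - v X \<le> v ((X \<inter> Y) \<union> (Y - X)) - v (X \<inter> Y)"
    using a by (intro diff_mono[OF f]) auto
  moreover have "X \<union> (Y - X) = X \<union> Y" "(X \<inter> Y) \<union> (Y - X) = Y" by auto
  ultimately show ?thesis by simp
qed

lemma two_sets: "Q \<union> S1 \<union> S2 \<subseteq> N \<Longrightarrow> S1 \<inter> S2 = {} \<Longrightarrow> v Q \<le> v (Q \<union> S1) + v (Q \<union> S2)"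
proof -
  assume a: "Q \<union> S1 \<union> S2 \<subseteq> N" "S1 \<inter> S2 = {}"
  have "v ((Q \<union> S1) \<union> (Q \<union> S2)) + v ((Q \<union> S1) \<inter> (Q \<union> S2)) \<le> v (Q \<union> S1) + v (Q \<union> S2)"
    using a by (intro lattice) auto
  moreover have "(Q \<union> S1) \<inter> (Q \<union> S2) = Q" using a by auto
  moreover have "0 \<le> v ((Q \<union> S1) \<union> (Q \<union> S2))" using a nonneg by (metis Un_absorb Un_assoc Un_commute)
  ultimately show ?thesis by simp
qed

lemma subadd: "X \<subseteq> N \<Longrightarrow> Y \<subseteq> N \<Longrightarrow> v (X \<union> Y) \<le> v X + v Y"
  using lattice[of X Y] nonneg by (metis Int_lower1 order_trans le_add_same_cancel1 add_le_cancel_left order.trans)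

lemma subadd_UN: "finite I \<Longrightarrow> (\<forall>i\<in>I. F i \<subseteq> N) \<Longrightarrow> v (\<Union>i\<in>I. F i) \<le> (\<Sum>i\<in>I. v (F i))"
proof (induction I rule: finite_induct)
  case empty then show ?case by (simp add: v0)
next
  case (insert x I)
  have "v (F x \<union> (\<Union>i\<in>I. F i)) \<le> v (F x) + v (\<Union>i\<in>I. F i)"
    using insert by (intro subadd) auto
  then show ?case using insert by auto
qed

lemma singletons: "T \<subseteq> N \<Longrightarrow> v T \<le> (\<Sum>u\<in>T. v {u})"
proof -
  assume "T \<subseteq> N"
  then have "v (\<Union>u\<in>T. {u}) \<le> (\<Sum>u\<in>T. v {u})"
    using finN finite_subset by (intro subadd_UN) auto
  then show ?thesis by simp
qed

end



locale mech =
  fixes ord :: "'a list" and v :: "'a set \<Rightarrow> real" and c :: "'a \<Rightarrow> real" and B :: real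
    and tie :: "nat \<Rightarrow> 'a \<Rightarrow> bool" and u0 :: 'a and al :: real
  assumes inst: "bfm_instance ord v c B u0" and al1: "1 < al"
begin

abbreviation "N \<equiv> set ord"
abbreviation "proc \<equiv> bfm_proc v c B tie"

lemma dist: "distinct ord" and v0: "v {} = 0" and vnn: "\<forall>S\<subseteq>N. 0 \<le> v S"
  and vsub: "\<forall>X Y u. X \<subseteq> Y \<longrightarrow> Y \<subseteq> N \<longrightarrow> u \<in> N - Y \<longrightarrow>
         v (insert u Y) - v Y \<le> v (insert u X) - v X"
  and cnn: "\<forall>u\<in>N. 0 \<le> c u" and Bpos: "0 < B"
  using inst unfolding bfm_instance_def by blast+

sublocale submod N v
  using v0 vnn vsub by unfold_locales auto

definition inv :: "'a set \<Rightarrow> nat \<Rightarrow> 'a set \<Rightarrow> 'a bfm_state \<Rightarrow> bool" where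
 "inv Rb e0 X s \<longleftrightarrow>
  Rs s \<subseteq> Rb \<and> A1 s \<union> A2 s \<subseteq> Rs s \<and> A1 s \<inter> A2 s = {} \<and> A1 s \<union> A2 s \<union> (Rb - Rs s) \<subseteq> X \<and>
  (Rb - Rs s) \<inter> (P1 s \<union> P2 s) = {} \<and> v (A1 s) \<le> rho s \<and> v (A2 s) \<le> rho s \<and>
  (0 < rho s \<longrightarrow> (\<Sum>w\<in>A2 s. max 0 (v (insert w (A1 s)) - v (A1 s))) \<le> v (A2 s) \<and>
                (\<Sum>w\<in>A1 s. max 0 (v (insert w (A2 s)) - v (A2 s))) \<le> v (A1 s) \<and>
                (\<forall>w\<in>Rb - Rs s. v (insert w (A1 s)) - v (A1 s) \<le> rho s * c w / B \<and>
                               v (insert w (A2 s)) - v (A2 s) \<le> rho s * c w / B)) \<and>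
  (\<forall>w\<in>Rs s. c w \<le> pr s w) \<and> evals s \<le> e0 + 4 * card X \<and>
  (ended s \<longrightarrow> (\<exists>w\<in>Rs s. rho s < v (insert w (A1 s)) \<or> rho s < v (insert w (A2 s)))) \<and>
  (\<not> ended s \<longrightarrow> (\<forall>w\<in>X. w \<in> Rs s \<longrightarrow> w \<in> P1 s \<union> P2 s \<union> A1 s \<union> A2 s))"

lemma proc_fields: "P1 (proc u s) = P1 s" "P2 (proc u s) = P2 s" "rho (proc u s) = rho s"
   "tt (proc u s) = tt s"
  by (simp_all add: bfm_proc_def Let_def)

lemma step:
  assumes I: "inv Rb e0 X s" and fX: "finite X" and uX: "u \<notin> X" and uN: "u \<in> N"
    and RbN: "Rb \<subseteq> N"
  shows "inv Rb e0 (insert u X) (proc u s)"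
proof (cases "ended s \<or> u \<notin> Rs s \<or> u \<in> P1 s \<or> u \<in> P2 s")
  case True
  then have eq: "proc u s = s" by (auto simp add: bfm_proc_def)
  have cX: "card (insert u X) = Suc (card X)" using fX uX by simp
  show ?thesis using I True unfolding eq inv_def cX by auto
next
  case False
  have cX: "card (insert u X) = Suc (card X)" using fX uX by simp
  have Rs_sub: "Rs s \<subseteq> Rb" and A_sub: "A1 s \<union> A2 s \<subseteq> Rs s" and dj: "A1 s \<inter> A2 s = {}"
    and AX: "A1 s \<union> A2 s \<union> (Rb - Rs s) \<subseteq> X" and RP: "(Rb - Rs s) \<inter> (P1 s \<union> P2 s) = {}"
    and vA1: "v (A1 s) \<le> rho s" and vA2: "v (A2 s) \<le> rho s"
    and pos: "0 < rho s \<longrightarrow> (\<Sum>w\<in>A2 s. max 0 (v (insert w (A1 s)) - v (A1 s))) \<le> v (A2 s) \<and>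
                (\<Sum>w\<in>A1 s. max 0 (v (insert w (A2 s)) - v (A2 s))) \<le> v (A1 s) \<and>
                (\<forall>w\<in>Rb - Rs s. v (insert w (A1 s)) - v (A1 s) \<le> rho s * c w / B \<and>
                               v (insert w (A2 s)) - v (A2 s) \<le> rho s * c w / B)"
    and prc: "\<forall>w\<in>Rs s. c w \<le> pr s w" and ev: "evals s \<le> e0 + 4 * card X"
    and nend: "\<not> ended s \<longrightarrow> (\<forall>w\<in>X. w \<in> Rs s \<longrightarrow> w \<in> P1 s \<union> P2 s \<union> A1 s \<union> A2 s)"
    using I unfolding inv_def by blast+
  have ne: "\<not> ended s" and uRs: "u \<in> Rs s" and nP: "u \<notin> P1 s" "u \<notin> P2 s" using False by auto
  have nA: "u \<notin> A1 s" "u \<notin> A2 s" using AX uX by auto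
  have A1N: "A1 s \<subseteq> N" and A2N: "A2 s \<subseteq> N" using A_sub Rs_sub RbN by auto
  have fA: "finite (A1 s)" "finite (A2 s)" using A1N A2N finN finite_subset by auto
  define m1 where "m1 = v (insert u (A1 s)) - v (A1 s)"
  define m2 where "m2 = v (insert u (A2 s)) - v (A2 s)"
  define j1 where "j1 = (m2 < m1 \<or> (m1 = m2 \<and> tie (tt s) u))"
  define Sj where "Sj = (if j1 then A1 s else A2 s)"
  define mj where "mj = (if j1 then m1 else m2)"
  define q where "q = min (pr s u) (mj / (rho s / B))"
  define s' where "s' = s\<lparr>pr := (pr s)(u := q), evals := evals s + 4\<rparr>"
  have eq: "proc u s = (if c u \<le> q then
           (if rho s < v (insert u Sj) then s'\<lparr>ended := True\<rparr>
            else if j1 then s'\<lparr>A1 := insert u (A1 s)\<rparr>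
            else s'\<lparr>A2 := insert u (A2 s)\<rparr>)
         else s'\<lparr>Rs := Rs s - {u}\<rparr>)"
    using False unfolding bfm_proc_def Let_def s'_def q_def mj_def Sj_def j1_def m1_def m2_def
    by simp
  have mj12: "m1 \<le> mj" "m2 \<le> mj" by (auto simp: mj_def j1_def)
  have cu0: "0 \<le> c u" using cnn uN by auto
  have mj_nn: "0 \<le> mj" if "0 < rho s" "c u \<le> q"
  proof -
    have "0 \<le> mj / (rho s / B)" using that cu0 q_def by linarith
    then show ?thesis using that Bpos by (simp add: zero_le_divide_iff zero_le_mult_iff)
  qed
  have mj_lt: "mj < rho s * c u / B" if "0 < rho s" "\<not> c u \<le> q"
  proof -
    have "c u \<le> pr s u" using prc uRs by auto
    then have "mj / (rho s / B) < c u" using that q_def by linarith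
    then show ?thesis using that Bpos by (simp add: divide_less_eq less_divide_eq mult.commute)
  qed
  show ?thesis
  proof (cases "c u \<le> q")
    case cq: True
    show ?thesis
    proof (cases "rho s < v (insert u Sj)")
      case True
      have "inv Rb e0 (insert u X) (s'\<lparr>ended := True\<rparr>)"
        unfolding inv_def s'_def using Rs_sub A_sub dj AX RP vA1 vA2 pos prc ev cX cq uRs True
        by (auto simp: Sj_def split: if_splits)
      then show ?thesis using eq cq True by simp
    next
      case nT: False
      show ?thesis
      proof (cases j1)
        case True
        have vins: "v (insert u (A1 s)) \<le> rho s" using nT True by (simp add: Sj_def)
        have P: "(\<Sum>w\<in>A2 s. max 0 (v (insert w (insert u (A1 s))) - v (insert u (A1 s)))) \<le> v (A2 s) \<and>
                (\<Sum>w\<in>insert u (A1 s). max 0 (v (insert w (A2 s)) - v (A2 s))) \<le> v (insert u (A1 s)) \<and>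
                (\<forall>w\<in>Rb - Rs s. v (insert w (insert u (A1 s))) - v (insert u (A1 s)) \<le> rho s * c w / B \<and>
                               v (insert w (A2 s)) - v (A2 s) \<le> rho s * c w / B)" if rp: "0 < rho s"
        proof (intro conjI ballI)
          have "(\<Sum>w\<in>A2 s. max 0 (v (insert w (insert u (A1 s))) - v (insert u (A1 s))))
              \<le> (\<Sum>w\<in>A2 s. max 0 (v (insert w (A1 s)) - v (A1 s)))"
          proof (rule sum_mono)
            fix w assume w: "w \<in> A2 s"
            have "v (insert w (insert u (A1 s))) - v (insert u (A1 s)) \<le> v (insert w (A1 s)) - v (A1 s)"
              using w dj A1N A2N uN nA by (intro marg_anti) auto
            then show "max 0 (v (insert w (insert u (A1 s))) - v (insert u (A1 s)))
              \<le> max 0 (v (insert w (A1 s)) - v (A1 s))" by simp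
          qed
          then show "(\<Sum>w\<in>A2 s. max 0 (v (insert w (insert u (A1 s))) - v (insert u (A1 s)))) \<le> v (A2 s)"
            using pos rp by linarith
        next
          have "max 0 m2 \<le> m1" using mj_nn[OF rp cq] True mj12 by (auto simp: mj_def)
          then have "max 0 m2 + (\<Sum>w\<in>A1 s. max 0 (v (insert w (A2 s)) - v (A2 s))) \<le> m1 + v (A1 s)"
            using pos rp by linarith
          then show "(\<Sum>w\<in>insert u (A1 s). max 0 (v (insert w (A2 s)) - v (A2 s))) \<le> v (insert u (A1 s))"
            using fA nA by (simp add: m1_def m2_def)
        next
          fix w assume w: "w \<in> Rb - Rs s"
          have "v (insert w (insert u (A1 s))) - v (insert u (A1 s)) \<le> v (insert w (A1 s)) - v (A1 s)"
            using w A_sub A1N uN nA uRs RbN by (intro marg_anti) auto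
          moreover have "v (insert w (A1 s)) - v (A1 s) \<le> rho s * c w / B" using pos rp w by blast
          ultimately show "v (insert w (insert u (A1 s))) - v (insert u (A1 s)) \<le> rho s * c w / B"
            by linarith
          show "v (insert w (A2 s)) - v (A2 s) \<le> rho s * c w / B" using pos rp w by blast
        qed
        have "inv Rb e0 (insert u X) (s'\<lparr>A1 := insert u (A1 s)\<rparr>)"
          unfolding inv_def s'_def using Rs_sub A_sub dj AX RP vA1 vA2 P prc ev cX cq uRs nA vins ne nend
          by auto
        then show ?thesis using eq cq nT True by simp
      next
        case False
        have vins: "v (insert u (A2 s)) \<le> rho s" using nT False by (simp add: Sj_def)
        have P: "(\<Sum>w\<in>insert u (A2 s). max 0 (v (insert w (A1 s)) - v (A1 s))) \<le> v (insert u (A2 s)) \<and>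
                (\<Sum>w\<in>A1 s. max 0 (v (insert w (insert u (A2 s))) - v (insert u (A2 s)))) \<le> v (A1 s) \<and>
                (\<forall>w\<in>Rb - Rs s. v (insert w (A1 s)) - v (A1 s) \<le> rho s * c w / B \<and>
                   v (insert w (insert u (A2 s))) - v (insert u (A2 s)) \<le> rho s * c w / B)" if rp: "0 < rho s"
        proof (intro conjI ballI)
          have "(\<Sum>w\<in>A1 s. max 0 (v (insert w (insert u (A2 s))) - v (insert u (A2 s))))
              \<le> (\<Sum>w\<in>A1 s. max 0 (v (insert w (A2 s)) - v (A2 s)))"
          proof (rule sum_mono)
            fix w assume w: "w \<in> A1 s"
            have "v (insert w (insert u (A2 s))) - v (insert u (A2 s)) \<le> v (insert w (A2 s)) - v (A2 s)"
              using w dj A1N A2N uN nA by (intro marg_anti) auto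
            then show "max 0 (v (insert w (insert u (A2 s))) - v (insert u (A2 s)))
              \<le> max 0 (v (insert w (A2 s)) - v (A2 s))" by simp
          qed
          then show "(\<Sum>w\<in>A1 s. max 0 (v (insert w (insert u (A2 s))) - v (insert u (A2 s)))) \<le> v (A1 s)"
            using pos rp by linarith
        next
          have "m1 \<le> m2" using False by (auto simp: j1_def)
          then have "max 0 m1 \<le> m2" using mj_nn[OF rp cq] False by (auto simp: mj_def)
          then have "max 0 m1 + (\<Sum>w\<in>A2 s. max 0 (v (insert w (A1 s)) - v (A1 s))) \<le> m2 + v (A2 s)"
            using pos rp by linarith
          then show "(\<Sum>w\<in>insert u (A2 s). max 0 (v (insert w (A1 s)) - v (A1 s))) \<le> v (insert u (A2 s))"
            using fA nA by (simp add: m1_def m2_def)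
        next
          fix w assume w: "w \<in> Rb - Rs s"
          have "v (insert w (insert u (A2 s))) - v (insert u (A2 s)) \<le> v (insert w (A2 s)) - v (A2 s)"
            using w A_sub A2N uN nA uRs RbN by (intro marg_anti) auto
          moreover have "v (insert w (A2 s)) - v (A2 s) \<le> rho s * c w / B" using pos rp w by blast
          ultimately show "v (insert w (insert u (A2 s))) - v (insert u (A2 s)) \<le> rho s * c w / B"
            by linarith
          show "v (insert w (A1 s)) - v (A1 s) \<le> rho s * c w / B" using pos rp w by blast
        qed
        have "inv Rb e0 (insert u X) (s'\<lparr>A2 := insert u (A2 s)\<rparr>)"
          unfolding inv_def s'_def using Rs_sub A_sub dj AX RP vA1 vA2 P prc ev cX cq uRs nA vins ne nend
          by auto
        then show ?thesis using eq cq nT False by simp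
      qed
    qed
  next
    case ncq: False
    have P: "(\<forall>w\<in>Rb - (Rs s - {u}). v (insert w (A1 s)) - v (A1 s) \<le> rho s * c w / B \<and>
                               v (insert w (A2 s)) - v (A2 s) \<le> rho s * c w / B)" if rp: "0 < rho s"
    proof
      fix w assume w: "w \<in> Rb - (Rs s - {u})"
      show "v (insert w (A1 s)) - v (A1 s) \<le> rho s * c w / B \<and>
                               v (insert w (A2 s)) - v (A2 s) \<le> rho s * c w / B"
      proof (cases "w = u")
        case True
        then show ?thesis using mj_lt[OF rp ncq] mj12 by (simp add: m1_def m2_def)
      next
        case False
        then show ?thesis using w pos rp by auto
      qed
    qed
    have "inv Rb e0 (insert u X) (s'\<lparr>Rs := Rs s - {u}\<rparr>)"
      unfolding inv_def s'_def using Rs_sub A_sub dj AX RP vA1 vA2 P pos prc ev cX uRs nA ne nend nP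
      by auto
    then show ?thesis using eq ncq by simp
  qed
qed

end



context mech begin

lemma fold_fields: "P1 (fold proc ys s) = P1 s" "P2 (fold proc ys s) = P2 s"
   "rho (fold proc ys s) = rho s" "tt (fold proc ys s) = tt s"
  by (induction ys arbitrary: s) (simp_all add: proc_fields)

lemma fold_inv: "inv Rb e0 X s \<Longrightarrow> finite X \<Longrightarrow> set ys \<inter> X = {} \<Longrightarrow> distinct ys \<Longrightarrow>
   set ys \<subseteq> N \<Longrightarrow> Rb \<subseteq> N \<Longrightarrow> inv Rb e0 (X \<union> set ys) (fold proc ys s)"
proof (induction ys arbitrary: X s)
  case Nil then show ?case by simp
next
  case (Cons y ys)
  have "inv Rb e0 (insert y X) (proc y s)" using Cons.prems by (intro step) auto
  then have "inv Rb e0 (insert y X \<union> set ys) (fold proc ys (proc y s))"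
    using Cons.prems by (intro Cons.IH) auto
  then show ?case by simp
qed

lemma invD: assumes "inv Rb e0 X s"
  shows "Rs s \<subseteq> Rb" "A1 s \<union> A2 s \<subseteq> Rs s" "A1 s \<inter> A2 s = {}"
    "A1 s \<union> A2 s \<union> (Rb - Rs s) \<subseteq> X" "(Rb - Rs s) \<inter> (P1 s \<union> P2 s) = {}"
    "v (A1 s) \<le> rho s" "v (A2 s) \<le> rho s"
    "0 < rho s \<Longrightarrow> (\<Sum>w\<in>A2 s. max 0 (v (insert w (A1 s)) - v (A1 s))) \<le> v (A2 s)"
    "0 < rho s \<Longrightarrow> (\<Sum>w\<in>A1 s. max 0 (v (insert w (A2 s)) - v (A2 s))) \<le> v (A1 s)"
    "0 < rho s \<Longrightarrow> w \<in> Rb - Rs s \<Longrightarrow> v (insert w (A1 s)) - v (A1 s) \<le> rho s * c w / B"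
    "0 < rho s \<Longrightarrow> w \<in> Rb - Rs s \<Longrightarrow> v (insert w (A2 s)) - v (A2 s) \<le> rho s * c w / B"
    "\<forall>w\<in>Rs s. c w \<le> pr s w" "evals s \<le> e0 + 4 * card X"
    "ended s \<Longrightarrow> (\<exists>w\<in>Rs s. rho s < v (insert w (A1 s)) \<or> rho s < v (insert w (A2 s)))"
    "\<not> ended s \<Longrightarrow> (\<forall>w\<in>X. w \<in> Rs s \<longrightarrow> w \<in> P1 s \<union> P2 s \<union> A1 s \<union> A2 s)"
  using assms unfolding inv_def by blast+

abbreviation "rnd \<equiv> bfm_round ord v c B al tie"

lemma round_fields: "P1 (rnd s) = A1 s" "P2 (rnd s) = A2 s"
   "rho (rnd s) = al * rho s" "tt (rnd s) = tt s + 1"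
  by (simp_all add: bfm_round_def fold_fields bfm_start_def)

lemma round_inv:
  assumes "Rs s \<subseteq> N" "\<forall>w\<in>Rs s. c w \<le> pr s w" "0 \<le> rho s"
  shows "inv (Rs s) (evals s) N (rnd s)"
proof -
  have "inv (Rs s) (evals s) {} (bfm_start al s)"
    using assms al1 unfolding inv_def bfm_start_def by (simp add: v0)
  then have "inv (Rs s) (evals s) ({} \<union> set ord) (fold proc ord (bfm_start al s))"
    using assms dist by (intro fold_inv) auto
  then show ?thesis by (simp add: bfm_round_def)
qed

abbreviation "R0 \<equiv> bfm_R0 ord c B"
abbreviation "st \<equiv> bfm_state_at ord v c B al tie u0"
abbreviation "rho1 \<equiv> v {u0}"

lemma st_Suc: "st (Suc k) = rnd (st k)"
  by (simp add: bfm_state_at_def)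

lemma st_0: "st 0 = bfm_init ord v c B u0"
  by (simp add: bfm_state_at_def)

lemma R0N: "R0 \<subseteq> N" by (auto simp: bfm_R0_def)

lemma cardN: "card N = length ord" using dist by (simp add: distinct_card)

context
  assumes R0ne: "R0 \<noteq> {}"
begin

lemma u0R0: "u0 \<in> R0" and u0max: "\<forall>u\<in>R0. v {u} \<le> rho1"
  using inst R0ne unfolding bfm_instance_def by blast+

lemma rho1_nn: "0 \<le> rho1" using u0R0 R0N vnn by auto

definition G :: "nat \<Rightarrow> bool" where
 "G k \<longleftrightarrow> Rs (st k) \<subseteq> R0 \<and> A1 (st k) \<union> A2 (st k) \<subseteq> Rs (st k) \<and>
    P1 (st k) \<union> P2 (st k) \<subseteq> Rs (st k) \<and> (\<forall>w\<in>Rs (st k). c w \<le> pr (st k) w) \<and>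
    rho (st k) = al ^ k * rho1 \<and> evals (st k) \<le> length ord + 4 * length ord * k \<and>
    A1 (st k) \<inter> A2 (st k) = {}"

lemma G_all: "G k"
proof (induction k)
  case 0
  have "\<forall>w\<in>R0. c w \<le> B" by (simp add: bfm_R0_def)
  then show ?case unfolding G_def st_0 using u0R0 by (simp add: bfm_init_def)
next
  case (Suc k)
  let ?s = "st k"
  have g: "Rs ?s \<subseteq> R0" "A1 ?s \<union> A2 ?s \<subseteq> Rs ?s" "\<forall>w\<in>Rs ?s. c w \<le> pr ?s w"
     "rho ?s = al ^ k * rho1" "evals ?s \<le> length ord + 4 * length ord * k"
    using Suc unfolding G_def by blast+
  have "0 \<le> rho ?s" using g(4) al1 rho1_nn by simp
  then have I: "inv (Rs ?s) (evals ?s) N (rnd ?s)"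
    using g R0N by (intro round_inv) auto
  show ?case unfolding G_def st_Suc
  proof (intro conjI)
    show "Rs (rnd ?s) \<subseteq> R0" using invD(1)[OF I] g by blast
    show "A1 (rnd ?s) \<union> A2 (rnd ?s) \<subseteq> Rs (rnd ?s)" using invD(2)[OF I] by blast
    show "P1 (rnd ?s) \<union> P2 (rnd ?s) \<subseteq> Rs (rnd ?s)"
      using invD(5)[OF I] g unfolding round_fields by blast
    show "\<forall>w\<in>Rs (rnd ?s). c w \<le> pr (rnd ?s) w" using invD(12)[OF I] by blast
    show "rho (rnd ?s) = al ^ Suc k * rho1" using g by (simp add: round_fields)
    show "evals (rnd ?s) \<le> length ord + 4 * length ord * Suc k"
    proof -
      have "evals (rnd ?s) \<le> evals ?s + 4 * card N" using invD(13)[OF I] by blast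
      then show ?thesis using g(5) cardN by simp
    qed
    show "A1 (rnd ?s) \<inter> A2 (rnd ?s) = {}" using invD(3)[OF I] by blast
  qed
qed

lemma inv_st: "inv (Rs (st k)) (evals (st k)) N (st (Suc k))"
proof -
  have g: "Rs (st k) \<subseteq> R0" "\<forall>w\<in>Rs (st k). c w \<le> pr (st k) w" "rho (st k) = al ^ k * rho1"
    using G_all[of k] unfolding G_def by blast+
  have "0 \<le> rho (st k)" using g(3) al1 rho1_nn by simp
  then show ?thesis unfolding st_Suc using g R0N by (intro round_inv) auto
qed

lemma rho_st: "rho (st k) = al ^ k * rho1" using G_all[of k] unfolding G_def by blast

lemma not_ended_done: "\<not> ended (st (Suc k)) \<Longrightarrow> bfm_done (st (Suc k))"
proof -
  assume ne: "\<not> ended (st (Suc k))"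
  have "Rs (st (Suc k)) \<subseteq> N" using G_all[of "Suc k"] R0N unfolding G_def by blast
  then show ?thesis using invD(15)[OF inv_st[of k] ne] unfolding bfm_done_def by blast
qed

lemma v_le_card: "T \<subseteq> R0 \<Longrightarrow> v T \<le> real (card T) * rho1"
proof -
  assume T: "T \<subseteq> R0"
  have "v T \<le> (\<Sum>u\<in>T. v {u})" using T R0N by (intro singletons) auto
  also have "\<dots> \<le> (\<Sum>u\<in>T. rho1)" using T u0max by (intro sum_mono) auto
  finally show ?thesis by simp
qed

lemma ended_witness: "ended (st (Suc k)) \<Longrightarrow>
   \<exists>w\<in>R0. \<exists>T\<in>{A1 (st (Suc k)), A2 (st (Suc k))}. rho (st (Suc k)) < v (insert w T)"
proof -
  assume e: "ended (st (Suc k))"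
  obtain w where w: "w \<in> Rs (st (Suc k))"
    "rho (st (Suc k)) < v (insert w (A1 (st (Suc k)))) \<or> rho (st (Suc k)) < v (insert w (A2 (st (Suc k))))"
    using invD(14)[OF inv_st[of k] e] by blast
  have "Rs (st (Suc k)) \<subseteq> R0" using G_all[of "Suc k"] unfolding G_def by blast
  then show ?thesis using w by blast
qed

lemma big_done: assumes "real (card N) \<le> al ^ Suc k" shows "bfm_done (st (Suc k))"
proof (rule ccontr)
  assume nd: "\<not> bfm_done (st (Suc k))"
  then have e: "ended (st (Suc k))" using not_ended_done by blast
  obtain w T where wT: "w \<in> R0" "T \<in> {A1 (st (Suc k)), A2 (st (Suc k))}" "rho (st (Suc k)) < v (insert w T)"
    using ended_witness[OF e] by blast
  have "T \<subseteq> Rs (st (Suc k))" using wT(2) G_all[of "Suc k"] unfolding G_def by blast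
  then have TR: "insert w T \<subseteq> R0" using wT(1) G_all[of "Suc k"] unfolding G_def by blast
  then have "card (insert w T) \<le> card N" using R0N by (intro card_mono) auto
  then have "real (card (insert w T)) * rho1 \<le> real (card N) * rho1" using rho1_nn
    by (intro mult_right_mono) auto
  also have "\<dots> \<le> al ^ Suc k * rho1" using assms rho1_nn by (intro mult_right_mono) auto
  finally have "v (insert w T) \<le> rho (st (Suc k))" using v_le_card[OF TR] rho_st by simp
  then show False using wT(3) by simp
qed

lemma exists_done: "\<exists>k\<ge>1. bfm_done (st k)"
proof -
  obtain n where n: "real (card N) < al ^ n" using real_arch_pow[OF al1] by blast
  have "al ^ n \<le> al ^ Suc n" using al1 by (intro power_increasing) auto
  then have "bfm_done (st (Suc n))" using n by (intro big_done) linarith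
  then show ?thesis by (intro exI[of _ "Suc n"]) auto
qed

definition K where "K = (LEAST k. 1 \<le> k \<and> bfm_done (st k))"

lemma K_props: "1 \<le> K" "bfm_done (st K)" "\<And>k. 1 \<le> k \<Longrightarrow> k < K \<Longrightarrow> \<not> bfm_done (st k)"
   "\<And>k. 1 \<le> k \<Longrightarrow> bfm_done (st k) \<Longrightarrow> K \<le> k"
proof -
  obtain k0 where "1 \<le> k0 \<and> bfm_done (st k0)" using exists_done by blast
  then show "1 \<le> K" "bfm_done (st K)" unfolding K_def by (metis (mono_tags, lifting) LeastI)+
  show "\<And>k. 1 \<le> k \<Longrightarrow> k < K \<Longrightarrow> \<not> bfm_done (st k)" unfolding K_def using not_less_Least by blast
  show "\<And>k. 1 \<le> k \<Longrightarrow> bfm_done (st k) \<Longrightarrow> K \<le> k" unfolding K_def by (simp add: Least_le)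
qed

lemma final_eq: "bfm_final ord v c B al tie u0 = st K"
  by (simp add: bfm_final_def K_def)

end
end



context mech begin

lemma half_bound1:
  assumes I: "inv Rb e0 X s" and RbN: "Rb \<subseteq> N" and rp: "0 < rho s"
    and Q: "Q \<subseteq> A1 s \<union> A2 s \<union> (Rb - Rs s)"
  shows "v (Q \<union> A1 s) \<le> v (A1 s) + (\<Sum>w\<in>Q \<inter> A2 s. max 0 (v (insert w (A1 s)) - v (A1 s)))
           + rho s * (\<Sum>w\<in>Q \<inter> (Rb - Rs s). c w) / B"
proof -
  have As: "A1 s \<union> A2 s \<subseteq> Rs s" "Rs s \<subseteq> Rb" using invD(1,2)[OF I] by auto
  have QN: "Q \<subseteq> N" "A1 s \<subseteq> N" using As RbN Q by blast+
  have fQ: "finite Q" using QN finN finite_subset by auto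
  let ?m = "\<lambda>w. v (insert w (A1 s)) - v (A1 s)"
  have T: "Q - A1 s = (Q \<inter> A2 s) \<union> (Q \<inter> (Rb - Rs s))" using Q invD(3)[OF I] As by auto
  have dj: "(Q \<inter> A2 s) \<inter> (Q \<inter> (Rb - Rs s)) = {}" using As by auto
  have "v (A1 s \<union> (Q - A1 s)) \<le> v (A1 s) + (\<Sum>w\<in>Q - A1 s. ?m w)"
    using fQ QN by (intro sum_marg) auto
  also have "(\<Sum>w\<in>Q - A1 s. ?m w) = (\<Sum>w\<in>Q \<inter> A2 s. ?m w) + (\<Sum>w\<in>Q \<inter> (Rb - Rs s). ?m w)"
    unfolding T using fQ dj by (intro sum.union_disjoint) auto
  also have "(\<Sum>w\<in>Q \<inter> A2 s. ?m w) \<le> (\<Sum>w\<in>Q \<inter> A2 s. max 0 (?m w))"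
    by (intro sum_mono) auto
  also have "(\<Sum>w\<in>Q \<inter> (Rb - Rs s). ?m w) \<le> (\<Sum>w\<in>Q \<inter> (Rb - Rs s). rho s * c w / B)"
    using invD(10)[OF I rp] by (intro sum_mono) auto
  also have "(\<Sum>w\<in>Q \<inter> (Rb - Rs s). rho s * c w / B) = rho s * (\<Sum>w\<in>Q \<inter> (Rb - Rs s). c w) / B"
    by (simp add: sum_divide_distrib sum_distrib_left)
  finally show ?thesis by (simp add: Un_commute)
qed

lemma half_bound2:
  assumes I: "inv Rb e0 X s" and RbN: "Rb \<subseteq> N" and rp: "0 < rho s"
    and Q: "Q \<subseteq> A1 s \<union> A2 s \<union> (Rb - Rs s)"
  shows "v (Q \<union> A2 s) \<le> v (A2 s) + (\<Sum>w\<in>Q \<inter> A1 s. max 0 (v (insert w (A2 s)) - v (A2 s)))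
           + rho s * (\<Sum>w\<in>Q \<inter> (Rb - Rs s). c w) / B"
proof -
  have As: "A1 s \<union> A2 s \<subseteq> Rs s" "Rs s \<subseteq> Rb" using invD(1,2)[OF I] by auto
  have QN: "Q \<subseteq> N" "A2 s \<subseteq> N" using As RbN Q by blast+
  have fQ: "finite Q" using QN finN finite_subset by auto
  let ?m = "\<lambda>w. v (insert w (A2 s)) - v (A2 s)"
  have T: "Q - A2 s = (Q \<inter> A1 s) \<union> (Q \<inter> (Rb - Rs s))" using Q invD(3)[OF I] As by auto
  have dj: "(Q \<inter> A1 s) \<inter> (Q \<inter> (Rb - Rs s)) = {}" using As by auto
  have "v (A2 s \<union> (Q - A2 s)) \<le> v (A2 s) + (\<Sum>w\<in>Q - A2 s. ?m w)"
    using fQ QN by (intro sum_marg) auto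
  also have "(\<Sum>w\<in>Q - A2 s. ?m w) = (\<Sum>w\<in>Q \<inter> A1 s. ?m w) + (\<Sum>w\<in>Q \<inter> (Rb - Rs s). ?m w)"
    unfolding T using fQ dj by (intro sum.union_disjoint) auto
  also have "(\<Sum>w\<in>Q \<inter> A1 s. ?m w) \<le> (\<Sum>w\<in>Q \<inter> A1 s. max 0 (?m w))"
    by (intro sum_mono) auto
  also have "(\<Sum>w\<in>Q \<inter> (Rb - Rs s). ?m w) \<le> (\<Sum>w\<in>Q \<inter> (Rb - Rs s). rho s * c w / B)"
    using invD(11)[OF I rp] by (intro sum_mono) auto
  also have "(\<Sum>w\<in>Q \<inter> (Rb - Rs s). rho s * c w / B) = rho s * (\<Sum>w\<in>Q \<inter> (Rb - Rs s). c w) / B"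
    by (simp add: sum_divide_distrib sum_distrib_left)
  finally show ?thesis by (simp add: Un_commute)
qed

lemma round_bound:
  assumes I: "inv Rb e0 X s" and RbN: "Rb \<subseteq> N" and rp: "0 < rho s"
    and Q: "Q \<subseteq> A1 s \<union> A2 s \<union> (Rb - Rs s)"
  shows "v Q \<le> 2 * (v (A1 s) + v (A2 s)) + 2 * (rho s * (\<Sum>w\<in>Q \<inter> (Rb - Rs s). c w) / B)"
    and "Q \<inter> (A1 s \<union> A2 s) = {} \<Longrightarrow>
         v Q \<le> v (A1 s) + v (A2 s) + 2 * (rho s * (\<Sum>w\<in>Q \<inter> (Rb - Rs s). c w) / B)"
proof -
  have As: "A1 s \<union> A2 s \<subseteq> Rs s" "Rs s \<subseteq> Rb" using invD(1,2)[OF I] by auto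
  have fA: "finite (A1 s)" "finite (A2 s)" using As RbN finN finite_subset by (meson le_sup_iff order_trans)+
  have two: "v Q \<le> v (Q \<union> A1 s) + v (Q \<union> A2 s)"
    using As RbN Q invD(3)[OF I] by (intro two_sets) blast+
  note h1 = half_bound1[OF I RbN rp Q] and h2 = half_bound2[OF I RbN rp Q]
  have s1: "(\<Sum>w\<in>Q \<inter> A2 s. max 0 (v (insert w (A1 s)) - v (A1 s))) \<le> v (A2 s)"
  proof -
    have "(\<Sum>w\<in>Q \<inter> A2 s. max 0 (v (insert w (A1 s)) - v (A1 s)))
        \<le> (\<Sum>w\<in>A2 s. max 0 (v (insert w (A1 s)) - v (A1 s)))"
      using fA by (intro sum_mono2) auto
    then show ?thesis using invD(8)[OF I rp] by linarith
  qed
  have s2: "(\<Sum>w\<in>Q \<inter> A1 s. max 0 (v (insert w (A2 s)) - v (A2 s))) \<le> v (A1 s)"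
  proof -
    have "(\<Sum>w\<in>Q \<inter> A1 s. max 0 (v (insert w (A2 s)) - v (A2 s)))
        \<le> (\<Sum>w\<in>A1 s. max 0 (v (insert w (A2 s)) - v (A2 s)))"
      using fA by (intro sum_mono2) auto
    then show ?thesis using invD(9)[OF I rp] by linarith
  qed
  show "v Q \<le> 2 * (v (A1 s) + v (A2 s)) + 2 * (rho s * (\<Sum>w\<in>Q \<inter> (Rb - Rs s). c w) / B)"
    using two h1 h2 s1 s2 by (smt (verit))
  assume "Q \<inter> (A1 s \<union> A2 s) = {}"
  then have "Q \<inter> A1 s = {}" "Q \<inter> A2 s = {}" by auto
  then show "v Q \<le> v (A1 s) + v (A2 s) + 2 * (rho s * (\<Sum>w\<in>Q \<inter> (Rb - Rs s). c w) / B)"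
    using two h1 h2 by simp
qed


context
  assumes R0ne: "R0 \<noteq> {}"
begin

definition rem :: "nat \<Rightarrow> 'a set" where "rem j = Rs (st j) - Rs (st (Suc j))"

lemma Rs0: "Rs (st 0) = R0" by (simp add: st_0 bfm_init_def)

lemma Rs_mono: "Rs (st (Suc j)) \<subseteq> Rs (st j)"
  using invD(1)[OF inv_st[OF R0ne, of j]] .

lemma Rs_R0: "Rs (st j) \<subseteq> R0"
  using G_all[OF R0ne, of j] unfolding G_def[OF R0ne] by blast

lemma rem_exists: "u \<in> R0 \<Longrightarrow> u \<notin> Rs (st k) \<Longrightarrow> \<exists>j<k. u \<in> rem j"
proof (induction k)
  case 0 then show ?case by (simp add: Rs0)
next
  case (Suc k)
  show ?case
  proof (cases "u \<in> Rs (st k)")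
    case True
    then have "u \<in> rem k" using Suc.prems unfolding rem_def by blast
    then show ?thesis by auto
  next
    case False
    then show ?thesis using Suc by (meson less_Suc_eq)
  qed
qed

lemma cost_tel: "Y \<subseteq> R0 \<Longrightarrow> (\<Sum>j<k. (\<Sum>w\<in>Y \<inter> rem j. c w)) = (\<Sum>w\<in>Y - Rs (st k). c w)"
proof (induction k)
  case 0
  have e: "Y - Rs (st 0) = {}" using Rs0 0 by blast
  show ?case unfolding e by simp
next
  case (Suc k)
  have "Y \<subseteq> N" using Suc.prems R0N by blast
  then have fO: "finite Y" using finite_subset finN by blast
  have eq: "Y - Rs (st (Suc k)) = (Y - Rs (st k)) \<union> (Y \<inter> rem k)"
    using Rs_mono[of k] unfolding rem_def by blast
  have "(\<Sum>w\<in>Y - Rs (st (Suc k)). c w) = (\<Sum>w\<in>Y - Rs (st k). c w) + (\<Sum>w\<in>Y \<inter> rem k. c w)"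
    unfolding eq using fO by (intro sum.union_disjoint) (auto simp del: bfm_state_at_def simp: rem_def)
  moreover have "(\<Sum>j<k. (\<Sum>w\<in>Y \<inter> rem j. c w)) = (\<Sum>w\<in>Y - Rs (st k). c w)"
    using Suc by blast
  ultimately show ?case by (simp only: sum.lessThan_Suc)
qed

lemma inv_rem: "inv (Rs (st j)) (evals (st j)) N (st (Suc j))"
  using inv_st[OF R0ne] .

lemma rem_eq: "Rs (st j) - Rs (st (Suc j)) = rem j" by (simp add: rem_def)

lemma RsN: "Rs (st j) \<subseteq> N" using Rs_R0 R0N by blast

lemma rho_pos: "0 < rho1 \<Longrightarrow> 0 < rho (st j)" using rho_st[OF R0ne] al1 by simp


lemma st_fields: "P1 (st (Suc j)) = A1 (st j)" "P2 (st (Suc j)) = A2 (st j)"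
  unfolding st_Suc by (simp_all only: round_fields)

lemma A_R0: "A1 (st j) \<subseteq> R0" "A2 (st j) \<subseteq> R0"
  using G_all[OF R0ne, of j] unfolding G_def[OF R0ne] by blast+

lemma RB:
  assumes rp: "0 < rho1" and Q: "Q \<subseteq> A1 (st (Suc j)) \<union> A2 (st (Suc j)) \<union> rem j"
  shows "v Q \<le> 2 * (v (A1 (st (Suc j))) + v (A2 (st (Suc j))))
             + 2 * (rho (st (Suc j)) * (\<Sum>w\<in>Q \<inter> rem j. c w) / B)"
    and "Q \<inter> (A1 (st (Suc j)) \<union> A2 (st (Suc j))) = {} \<Longrightarrow>
         v Q \<le> v (A1 (st (Suc j))) + v (A2 (st (Suc j)))
             + 2 * (rho (st (Suc j)) * (\<Sum>w\<in>Q \<inter> rem j. c w) / B)"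
  using round_bound[OF inv_rem RsN rho_pos[OF rp], of Q] Q unfolding rem_eq by blast+

lemma vA_le: "v (A1 (st (Suc j))) \<le> rho (st (Suc j))" "v (A2 (st (Suc j))) \<le> rho (st (Suc j))"
  using invD(6,7)[OF inv_rem] by blast+

lemma geom: "(al - 1) * (\<Sum>j<m. al ^ Suc j) = al ^ Suc m - al"
  by (induction m) (simp_all add: algebra_simps)

lemma approx:
  assumes alv: "al = 1 + sqrt 3" and rp: "0 < rho1"
    and YN: "Y \<subseteq> N" and cY: "(\<Sum>u\<in>Y. c u) \<le> B"
    and XP1: "v (P1 (st K)) \<le> X" and XP2: "v (P2 (st K)) \<le> X"
    and XA1: "v (A1 (st K)) \<le> X" and XA2: "v (A2 (st K)) \<le> X"
  shows "v Y \<le> (12 + 4 * sqrt 3) * X"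
proof -
  have fY: "finite Y" using finite_subset[OF YN finN] .
  have YR0: "Y \<subseteq> R0"
  proof
    fix u assume u: "u \<in> Y"
    have "c u \<le> (\<Sum>u\<in>Y. c u)" using u YN cnn fY by (intro member_le_sum) auto
    then show "u \<in> R0" using u YN cY by (auto simp: bfm_R0_def)
  qed
  have "A1 (st K) \<subseteq> N" using A_R0(1)[of K] R0N by (rule order_trans)
  then have "0 \<le> v (A1 (st K))" using vnn by blast
  then have X0: "0 \<le> X" using XA1 by linarith
  define cc where "cc j = (\<Sum>w\<in>Y \<inter> rem j. c w)" for j
  have cc0: "0 \<le> cc j" for j unfolding cc_def using YN cnn by (intro sum_nonneg) auto
  have ccsum: "(\<Sum>j<K. cc j) \<le> B"
  proof -
    have "(\<Sum>j<K. cc j) = (\<Sum>w\<in>Y - Rs (st K). c w)" unfolding cc_def using cost_tel[OF YR0] .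
    also have "\<dots> \<le> (\<Sum>w\<in>Y. c w)" using fY YN cnn by (intro sum_mono2) auto
    finally show ?thesis using cY by linarith
  qed
  have s3: "sqrt 3 * sqrt 3 = (3::real)" by simp
  have s1: "1 \<le> sqrt (3::real)" by simp
  have al1': "1 \<le> al" using al1 by simp
  obtain J where K: "K = Suc J" using K_props(1)[OF R0ne] by (cases K) auto
  show ?thesis
  proof (cases J)
    case 0
    have K1: "K = 1" using K 0 by simp
    have P1e: "P1 (st 1) = {u0}" and P2e: "P2 (st 1) = {}"
      using st_fields[of 0] by (simp_all add: st_0 bfm_init_def)
    define Q1 where "Q1 = Y \<inter> (A1 (st 1) \<union> A2 (st 1) \<union> rem 0)"
    define Q0 where "Q0 = Y \<inter> {u0}"
    have dn: "bfm_done (st 1)" using K_props(2)[OF R0ne] K1 by simp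
    have Yeq: "Y = Q1 \<union> Q0"
    proof
      show "Y \<subseteq> Q1 \<union> Q0"
      proof
        fix u assume u: "u \<in> Y"
        show "u \<in> Q1 \<union> Q0"
        proof (cases "u \<in> Rs (st 1)")
          case True
          then show ?thesis using dn u P1e P2e unfolding bfm_done_def Q1_def Q0_def by blast
        next
          case False
          then have "u \<in> rem 0" using u YR0 Rs0 unfolding rem_def One_nat_def by blast
          then show ?thesis using u unfolding Q1_def by blast
        qed
      qed
      show "Q1 \<union> Q0 \<subseteq> Y" unfolding Q1_def Q0_def by blast
    qed
    have "v Y \<le> v Q1 + v Q0" unfolding Yeq using YN Yeq by (intro subadd) blast+
    moreover have "v Q1 \<le> 2 * (X + X) + 2 * (rho (st 1) * cc 0 / B)"
    proof -
      have "Q1 \<subseteq> A1 (st (Suc 0)) \<union> A2 (st (Suc 0)) \<union> rem 0" unfolding Q1_def by simp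
      note RB(1)[OF rp this]
      moreover have "Q1 \<inter> rem 0 = Y \<inter> rem 0" unfolding Q1_def by blast
      ultimately show ?thesis using XA1 XA2 K1 unfolding cc_def by simp
    qed
    moreover have "rho (st 1) * cc 0 / B \<le> al * X"
    proof -
      have "cc 0 \<le> B" using ccsum K1 by simp
      then have "rho (st 1) * cc 0 \<le> rho (st 1) * B"
        using rho_pos[OF rp, of 1] by (intro mult_left_mono) auto
      then have "rho (st 1) * cc 0 / B \<le> rho (st 1)" using Bpos by (simp add: divide_le_eq)
      also have "rho (st 1) = al * rho1" using rho_st[OF R0ne, of 1] by simp
      also have "\<dots> \<le> al * X" using XP1 P1e K1 al1 by (intro mult_left_mono) auto
      finally show ?thesis .
    qed
    moreover have "v Q0 \<le> X"
    proof (cases "u0 \<in> Y")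
      case True
      then have "Q0 = {u0}" unfolding Q0_def by blast
      then show ?thesis using XP1 P1e K1 by simp
    next
      case False
      then have "Q0 = {}" unfolding Q0_def by blast
      then show ?thesis using X0 v0 by simp
    qed
    ultimately have "v Y \<le> 5 * X + 2 * (al * X)" by (smt (verit))
    then have "v Y \<le> (7 + 2 * al) * X" using X0 by (simp add: algebra_simps)
    also have "\<dots> \<le> (12 + 4 * sqrt 3) * X" using X0 alv by (intro mult_right_mono) auto
    finally show ?thesis .
  next
    case (Suc m)
    have KS: "K = Suc (Suc m)" using K Suc by simp
    define sK where "sK = st K"
    define s1 where "s1 = st (Suc m)"
    have PA: "P1 sK = A1 s1" "P2 sK = A2 s1" unfolding sK_def s1_def KS using st_fields by blast+
    define QK where "QK = Y \<inter> (A1 sK \<union> A2 sK \<union> rem (Suc m))"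
    define QK1 where "QK1 = Y \<inter> (A1 s1 \<union> A2 s1 \<union> rem m)"
    define F where "F j = Y \<inter> rem j" for j
    have dn: "bfm_done sK" using K_props(2)[OF R0ne] unfolding sK_def .
    have Yeq: "Y = QK \<union> QK1 \<union> (\<Union>j\<in>{..<m}. F j)"
    proof
      show "Y \<subseteq> QK \<union> QK1 \<union> (\<Union>j\<in>{..<m}. F j)"
      proof
        fix u assume u: "u \<in> Y"
        show "u \<in> QK \<union> QK1 \<union> (\<Union>j\<in>{..<m}. F j)"
        proof (cases "u \<in> Rs sK")
          case True
          then show ?thesis using dn u PA unfolding bfm_done_def QK_def QK1_def by blast
        next
          case False
          then obtain j where j: "j < K" "u \<in> rem j" using rem_exists u YR0 unfolding sK_def by blast
          show ?thesis
          proof (cases "j < m")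
            case True then show ?thesis using j u unfolding F_def by blast
          next
            case False
            then have "j = m \<or> j = Suc m" using j KS by auto
            then show ?thesis using j u unfolding QK_def QK1_def by blast
          qed
        qed
      qed
      show "QK \<union> QK1 \<union> (\<Union>j\<in>{..<m}. F j) \<subseteq> Y" unfolding QK_def QK1_def F_def by blast
    qed
    have subs: "QK \<subseteq> N" "QK1 \<subseteq> N" "(\<Union>j\<in>{..<m}. F j) \<subseteq> N" "\<forall>j\<in>{..<m}. F j \<subseteq> N"
      using Yeq YN unfolding F_def by blast+
    have "v Y = v ((QK \<union> QK1) \<union> (\<Union>j\<in>{..<m}. F j))" using Yeq by simp
    also have "\<dots> \<le> v (QK \<union> QK1) + v (\<Union>j\<in>{..<m}. F j)"
      using subs by (intro subadd) blast+
    also have "v (QK \<union> QK1) \<le> v QK + v QK1" using subs by (intro subadd)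
    also have "v (\<Union>j\<in>{..<m}. F j) \<le> (\<Sum>j<m. v (F j))" using subs by (intro subadd_UN) auto
    finally have vY: "v Y \<le> v QK + v QK1 + (\<Sum>j<m. v (F j))" by simp
    have rK: "rho sK = al ^ K * rho1" unfolding sK_def using rho_st[OF R0ne] .
    have rmon: "rho (st j) \<le> rho sK" if "j \<le> K" for j
    proof -
      have "al ^ j \<le> al ^ K" using al1' that by (intro power_increasing) auto
      then show ?thesis using rK rho_st[OF R0ne, of j] rho1_nn[OF R0ne] by (simp add: mult_right_mono)
    qed
    have dterm: "rho (st j) * cc i / B \<le> rho sK * cc i / B" if "j \<le> K" for i j
      using rmon[OF that] cc0[of i] Bpos by (intro divide_right_mono mult_right_mono) auto
    have bQK: "v QK \<le> 4 * X + 2 * (rho sK * cc (Suc m) / B)"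
    proof -
      have "QK \<subseteq> A1 (st (Suc (Suc m))) \<union> A2 (st (Suc (Suc m))) \<union> rem (Suc m)"
        unfolding QK_def sK_def KS by blast
      note RB(1)[OF rp this]
      moreover have "QK \<inter> rem (Suc m) = Y \<inter> rem (Suc m)" unfolding QK_def by blast
      ultimately show ?thesis using XA1 XA2 unfolding cc_def sK_def KS by simp
    qed
    have bQK1: "v QK1 \<le> 4 * X + 2 * (rho sK * cc m / B)"
    proof -
      have "QK1 \<subseteq> A1 (st (Suc m)) \<union> A2 (st (Suc m)) \<union> rem m"
        unfolding QK1_def s1_def by blast
      note RB(1)[OF rp this]
      moreover have "QK1 \<inter> rem m = Y \<inter> rem m" unfolding QK1_def by blast
      moreover have "v (A1 s1) \<le> X" "v (A2 s1) \<le> X" using XP1 XP2 PA unfolding sK_def by auto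
      moreover have "rho (st (Suc m)) * cc m / B \<le> rho sK * cc m / B" using dterm KS by simp
      ultimately show ?thesis unfolding cc_def s1_def by simp
    qed
    have bF: "v (F j) \<le> 2 * (al ^ Suc j * rho1) + 2 * (rho sK * cc j / B)" if "j < m" for j
    proof -
      have "F j \<subseteq> A1 (st (Suc j)) \<union> A2 (st (Suc j)) \<union> rem j" unfolding F_def by blast
      moreover have "F j \<inter> (A1 (st (Suc j)) \<union> A2 (st (Suc j))) = {}"
        using G_all[OF R0ne, of "Suc j"] unfolding G_def[OF R0ne] F_def rem_def by blast
      ultimately have "v (F j) \<le> v (A1 (st (Suc j))) + v (A2 (st (Suc j)))
             + 2 * (rho (st (Suc j)) * (\<Sum>w\<in>F j \<inter> rem j. c w) / B)" using RB(2)[OF rp] by blast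
      moreover have "F j \<inter> rem j = Y \<inter> rem j" unfolding F_def by blast
      moreover have "rho (st (Suc j)) = al ^ Suc j * rho1" using rho_st[OF R0ne] .
      moreover have "rho (st (Suc j)) * cc j / B \<le> rho sK * cc j / B" using dterm that KS by simp
      ultimately show ?thesis using vA_le[of j] unfolding cc_def by simp
    qed
    define S where "S = (\<Sum>j<m. al ^ Suc j * rho1)"
    have bFs: "(\<Sum>j<m. v (F j)) \<le> 2 * S + 2 * (rho sK * (\<Sum>j<m. cc j) / B)"
    proof -
      have "(\<Sum>j<m. v (F j)) \<le> (\<Sum>j<m. 2 * (al ^ Suc j * rho1) + 2 * (rho sK * cc j / B))"
        using bF by (intro sum_mono) auto
      also have "\<dots> = 2 * S + 2 * (rho sK * (\<Sum>j<m. cc j) / B)"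
        unfolding S_def by (simp add: sum.distrib sum_distrib_left sum_divide_distrib)
      finally show ?thesis .
    qed
    have ccK: "(\<Sum>j<K. cc j) = (\<Sum>j<m. cc j) + cc m + cc (Suc m)" unfolding KS by simp
    have cT: "rho sK * (\<Sum>j<K. cc j) / B \<le> rho sK"
    proof -
      have "rho sK * (\<Sum>j<K. cc j) \<le> rho sK * B"
        using ccsum rho_pos[OF rp, of K] unfolding sK_def by (intro mult_left_mono) auto
      then show ?thesis using Bpos by (simp add: divide_le_eq)
    qed
    have "rho sK * (\<Sum>j<K. cc j) / B = rho sK * (\<Sum>j<m. cc j) / B + rho sK * cc m / B + rho sK * cc (Suc m) / B"
      unfolding ccK by (simp add: algebra_simps add_divide_distrib)
    then have vY2: "v Y \<le> 8 * X + 2 * S + 2 * rho sK"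
      using vY bQK bQK1 bFs cT by linarith
    define r where "r = rho s1"
    have r_eq: "r = al ^ Suc m * rho1" unfolding r_def s1_def using rho_st[OF R0ne] .
    have rK2: "rho sK = al * r" using rK r_eq KS by simp
    have alr: "al * rho1 \<le> r"
    proof -
      have "1 \<le> al ^ m" using al1' by simp
      then have "al * 1 \<le> al * al ^ m" using al1 by (intro mult_left_mono) auto
      then show ?thesis unfolding r_eq using rho1_nn[OF R0ne] by (simp add: mult_right_mono)
    qed
    have geomS: "(al - 1) * S \<le> r"
    proof -
      have "(al - 1) * S = (al - 1) * (\<Sum>j<m. al ^ Suc j) * rho1"
        unfolding S_def by (simp add: sum_distrib_right)
      also have "\<dots> = (al ^ Suc m - al) * rho1" using geom by simp
      also have "\<dots> \<le> al ^ Suc m * rho1" using al1 rho1_nn[OF R0ne] by (simp add: algebra_simps)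
      finally show ?thesis unfolding r_eq .
    qed
    have ended: "ended s1"
    proof -
      have "\<not> bfm_done s1" unfolding s1_def using K_props(3)[OF R0ne, of "Suc m"] KS by simp
      then show ?thesis unfolding s1_def using not_ended_done[OF R0ne] by blast
    qed
    obtain w T where wT: "w \<in> R0" "T \<in> {A1 s1, A2 s1}" "rho s1 < v (insert w T)"
      using ended_witness[OF R0ne ended[unfolded s1_def]] unfolding s1_def by blast
    have TN: "T \<subseteq> N" using wT(2) A_R0 R0N unfolding s1_def by blast
    have vT: "v T \<le> X" using wT(2) XP1 XP2 PA unfolding sK_def by auto
    have "v (insert w T) \<le> v {w} + v T"
      using subadd[of "{w}" T] TN wT(1) R0N by auto
    also have "v {w} \<le> rho1" using u0max[OF R0ne] wT(1) by blast
    finally have rlt: "r < rho1 + X" using wT(3) vT unfolding r_def by linarith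
    define s where "s = sqrt (3::real)"
    have ss: "s * s = 3" and sge: "1 \<le> s" unfolding s_def using s3 s1 by auto
    have ald: "al = 1 + s" unfolding s_def using alv .
    have h1: "s * S \<le> r" using geomS ald by simp
    have h2: "s * r \<le> (1 + s) * X"
    proof -
      have "al * r < al * (rho1 + X)" using rlt al1 by simp
      then show ?thesis using alr ald by (simp add: algebra_simps)
    qed
    have h3: "3 * S \<le> s * r"
    proof -
      have "s * (s * S) \<le> s * r" using h1 sge by (intro mult_left_mono) auto
      then show ?thesis using ss by (simp add: mult.assoc[symmetric])
    qed
    have h4: "3 * r \<le> (s + 3) * X"
    proof -
      have "s * (s * r) \<le> s * ((1 + s) * X)" using h2 sge by (intro mult_left_mono) auto
      then show ?thesis using ss by (simp add: algebra_simps mult.assoc[symmetric])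
    qed
    have h5: "X \<le> s * X" using mult_right_mono[OF sge X0] by simp
    have "v Y \<le> 8 * X + 2 * S + 2 * (1 + s) * r" using vY2 rK2 ald by (simp add: algebra_simps)
    moreover have h2': "s * r \<le> X + s * X" using h2 by (simp add: algebra_simps)
    moreover have h4': "3 * r \<le> s * X + 3 * X" using h4 by (simp add: algebra_simps)
    ultimately have "v Y \<le> 12 * X + 4 * (s * X)" using h3 h5 by (simp add: algebra_simps)
    then show ?thesis unfolding s_def by (simp add: algebra_simps)
  qed
qed

end
end



context mech begin

lemma Y_R0: "Y \<subseteq> N \<Longrightarrow> (\<Sum>u\<in>Y. c u) \<le> B \<Longrightarrow> Y \<subseteq> R0"
proof
  fix u assume YN: "Y \<subseteq> N" and cY: "(\<Sum>u\<in>Y. c u) \<le> B" and u: "u \<in> Y"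
  have fY: "finite Y" using finite_subset[OF YN finN] .
  have "c u \<le> (\<Sum>u\<in>Y. c u)" using u YN cnn fY by (intro member_le_sum) auto
  then show "u \<in> R0" using u YN cY by (auto simp: bfm_R0_def)
qed

lemma num_evals_bound:
  assumes al2: "2 \<le> al" and n2: "2 \<le> length ord"
  shows "real (bfm_num_evals ord v c B al tie u0)
           \<le> 11 / ln 2 * real (length ord) * ln (real (length ord))"
proof -
  define n where "n = length ord"
  define L where "L = log 2 (real n)"
  have n2': "2 \<le> real n" using n2 unfolding n_def by simp
  have L1: "1 \<le> L" unfolding L_def using n2' by (subst le_log_iff) auto
  have rhs: "11 / ln 2 * real n * ln (real n) = 11 * real n * L"
    unfolding L_def log_def by simp
  have nL: "real n \<le> real n * L" using L1 n2' by (simp add: mult_le_cancel_left1)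
  show ?thesis
  proof (cases "R0 = {}")
    case True
    then have "bfm_num_evals ord v c B al tie u0 = n" by (simp add: bfm_num_evals_def n_def)
    then show ?thesis using nL rhs L1 n2' unfolding n_def[symmetric] by simp
  next
    case R0ne: False
    define k0 where "k0 = nat \<lceil>L\<rceil>"
    have k0r: "real k0 = of_int \<lceil>L\<rceil>" unfolding k0_def using L1 by simp
    have k0ge: "L \<le> real k0" "real k0 \<le> L + 1" unfolding k0r by simp_all
    have k01: "1 \<le> k0" using k0ge(1) L1 by simp
    then obtain k' where k': "k0 = Suc k'" by (cases k0) auto
    have "real n = 2 powr L" unfolding L_def using n2' by simp
    also have "\<dots> \<le> 2 powr (real k0)" using k0ge(1) by (intro powr_mono) auto
    also have "\<dots> = 2 ^ k0" by (simp add: powr_realpow)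
    also have "\<dots> \<le> al ^ k0" using al2 by (intro power_mono) auto
    finally have "real (card N) \<le> al ^ Suc k'" using cardN k' unfolding n_def by simp
    then have "bfm_done (st k0)" using big_done[OF R0ne] k' by simp
    then have Kk0: "K \<le> k0" using K_props(4)[OF R0ne] k01 by blast
    have ev: "evals (st K) \<le> n + 4 * n * K"
      using G_all[OF R0ne, of K] unfolding G_def[OF R0ne] n_def by blast
    have eq: "bfm_num_evals ord v c B al tie u0 = evals (st K) + 4"
      using R0ne final_eq[OF R0ne] by (simp add: bfm_num_evals_def)
    have "real (evals (st K) + 4) \<le> real n + 4 * real n * real K + 4"
      using of_nat_mono[OF ev] by simp
    also have "real K \<le> L + 1" using Kk0 k0ge(2) by linarith
    then have "4 * real n * real K \<le> 4 * real n * (L + 1)" by (intro mult_left_mono) auto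
    then have "real n + 4 * real n * real K + 4 \<le> real n + 4 * real n * (L + 1) + 4" by linarith
    also have "\<dots> \<le> 11 * real n * L"
    proof -
      have "real n + 4 * real n * (L + 1) + 4 = 5 * real n + 4 * (real n * L) + 4" by (simp add: algebra_simps)
      moreover have "11 * real n * L = 11 * (real n * L)" by simp
      ultimately show ?thesis using nL n2' by linarith
    qed
    finally show ?thesis unfolding eq rhs n_def[symmetric] .
  qed
qed

lemma main_part1:
  assumes alv: "al = 1 + sqrt 3"
  shows "bfm_terminates ord v c B al tie u0 \<and>
    (\<forall>A \<in> bfm_candidates ord v c B al tie u0.
       (\<forall>A' \<in> bfm_candidates ord v c B al tie u0. v A' \<le> v A) \<longrightarrow>
       (\<forall>Opt \<subseteq> set ord. (\<Sum>u\<in>Opt. c u) \<le> B \<longrightarrow> v Opt \<le> (12 + 4 * sqrt 3) * v A))"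
proof (cases "R0 = {}")
  case True
  have "bfm_terminates ord v c B al tie u0" using True by (simp add: bfm_terminates_def)
  moreover have "v Opt \<le> (12 + 4 * sqrt 3) * v A"
    if "A \<in> bfm_candidates ord v c B al tie u0" "Opt \<subseteq> N" "(\<Sum>u\<in>Opt. c u) \<le> B" for A Opt
  proof -
    have "A = {}" using that(1) True by (simp add: bfm_candidates_def)
    moreover have "Opt = {}" using Y_R0[OF that(2,3)] True by blast
    ultimately show ?thesis using v0 by simp
  qed
  ultimately show ?thesis by blast
next
  case R0ne: False
  have "bfm_terminates ord v c B al tie u0" using exists_done[OF R0ne] by (simp add: bfm_terminates_def)
  moreover have "v Opt \<le> (12 + 4 * sqrt 3) * v A"
    if A: "A \<in> bfm_candidates ord v c B al tie u0"
      and mx: "\<forall>A' \<in> bfm_candidates ord v c B al tie u0. v A' \<le> v A"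
      and Opt: "Opt \<subseteq> N" "(\<Sum>u\<in>Opt. c u) \<le> B" for A Opt
  proof -
    have cand: "bfm_candidates ord v c B al tie u0 = {P1 (st K), P2 (st K), A1 (st K), A2 (st K)}"
      using R0ne final_eq[OF R0ne] by (simp add: bfm_candidates_def Let_def)
    have X: "v (P1 (st K)) \<le> v A" "v (P2 (st K)) \<le> v A" "v (A1 (st K)) \<le> v A" "v (A2 (st K)) \<le> v A"
      using mx unfolding cand by auto
    show ?thesis
    proof (cases "0 < rho1")
      case True
      show ?thesis using approx[OF R0ne alv True Opt X] .
    next
      case False
      then have r0: "rho1 = 0" using rho1_nn[OF R0ne] by simp
      have OR: "Opt \<subseteq> R0" using Y_R0[OF Opt] .
      have "v Opt \<le> (\<Sum>u\<in>Opt. v {u})" using Opt(1) by (intro singletons)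
      also have "\<dots> \<le> (\<Sum>u\<in>Opt. 0)" using OR u0max[OF R0ne] r0 by (intro sum_mono) auto
      finally have "v Opt \<le> 0" by simp
      moreover have "A1 (st K) \<subseteq> N" using A_R0(1)[OF R0ne, of K] R0N by (rule order_trans)
      then have "0 \<le> v (A1 (st K))" using vnn by blast
      then have "0 \<le> v A" using X(3) by linarith
      ultimately show ?thesis by (smt (verit) mult_nonneg_nonneg real_sqrt_ge_zero)
    qed
  qed
  ultimately show ?thesis by blast
qed

end

lemma part1:
  shows "\<forall>(ord :: 'a list) v c B tie u0. bfm_instance ord v c B u0 \<longrightarrow>
            bfm_terminates ord v c B (1 + sqrt 3) tie u0 \<and>
            (\<forall>A \<in> bfm_candidates ord v c B (1 + sqrt 3) tie u0.
               (\<forall>A' \<in> bfm_candidates ord v c B (1 + sqrt 3) tie u0. v A' \<le> v A) \<longrightarrow>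
               (\<forall>Opt \<subseteq> set ord. (\<Sum>u\<in>Opt. c u) \<le> B \<longrightarrow> v Opt \<le> (12 + 4 * sqrt 3) * v A))"
proof (intro allI impI)
  fix ord :: "'a list" and v c B tie u0
  assume "bfm_instance ord v c B u0"
  then interpret mech ord v c B tie u0 "1 + sqrt 3" by unfold_locales simp_all
  show "bfm_terminates ord v c B (1 + sqrt 3) tie u0 \<and>
            (\<forall>A \<in> bfm_candidates ord v c B (1 + sqrt 3) tie u0.
               (\<forall>A' \<in> bfm_candidates ord v c B (1 + sqrt 3) tie u0. v A' \<le> v A) \<longrightarrow>
               (\<forall>Opt \<subseteq> set ord. (\<Sum>u\<in>Opt. c u) \<le> B \<longrightarrow> v Opt \<le> (12 + 4 * sqrt 3) * v A))"
    using main_part1 by simp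
qed

lemma part2:
  shows "\<exists>C::real. \<forall>(ord :: 'a list) v c B tie u0.
            bfm_instance ord v c B u0 \<and> 2 \<le> length ord \<longrightarrow>
            real (bfm_num_evals ord v c B (1 + sqrt 3) tie u0)
              \<le> C * real (length ord) * ln (real (length ord))"
proof (rule exI[of _ "11 / ln 2"], intro allI impI)
  fix ord :: "'a list" and v c B tie u0
  assume h: "bfm_instance ord v c B u0 \<and> 2 \<le> length ord"
  then interpret mech ord v c B tie u0 "1 + sqrt 3" by unfold_locales simp_all
  have "2 \<le> 1 + sqrt (3::real)" by simp
  then show "real (bfm_num_evals ord v c B (1 + sqrt 3) tie u0)
            \<le> 11 / ln 2 * real (length ord) * ln (real (length ord))"
    using num_evals_bound h by blast
qed

theorem theorem5p4:
  shows "(\<forall>(ord :: 'a list) v c B tie u0. bfm_instance ord v c B u0 \<longrightarrow>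
            bfm_terminates ord v c B (1 + sqrt 3) tie u0 \<and>
            (\<forall>A \<in> bfm_candidates ord v c B (1 + sqrt 3) tie u0.
               (\<forall>A' \<in> bfm_candidates ord v c B (1 + sqrt 3) tie u0. v A' \<le> v A) \<longrightarrow>
               (\<forall>Opt \<subseteq> set ord. (\<Sum>u\<in>Opt. c u) \<le> B \<longrightarrow> v Opt \<le> (12 + 4 * sqrt 3) * v A)))
       \<and> (\<exists>C::real. \<forall>(ord :: 'a list) v c B tie u0.
            bfm_instance ord v c B u0 \<and> 2 \<le> length ord \<longrightarrow>
            real (bfm_num_evals ord v c B (1 + sqrt 3) tie u0)
              \<le> C * real (length ord) * ln (real (length ord)))"
  by (rule conjI[OF part1 part2])


end
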